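(* Let $r\in(0,1]$, $\alpha\in(0,1]$, and for $\mu>0$ let $Y_{r,\alpha,\mu}$ be a random variable with $$Y_{r,\alpha,\mu}\stackrel{d}{=}\frac{S_{\alpha,1}Z_{r,\mu}^{1/\alpha}}{1+S_{\alpha,1}Z_{r,\mu}^{1/\alpha}}$$ ($S_{\alpha,1}$, $Z_{r,\mu}$ independent). Then, as $\mu\to0$, $$\mu^{-1/\alpha}Y_{r,\alpha,\mu}\Longrightarrow S_{\alpha,1}Z_{r,1}^{1/\alpha}\stackrel{d}{=}S_{\alpha,1}\cdot\Big(\frac{G_{r,1}+G_{1-r,1}}{G_{r,1}}\Big)^{1/\alpha},$$ where $S_{\alpha,1}$ and $Z_{r,1}$ (respectively $S_{\alpha,1}$, $G_{r,1}$, $G_{1-r,1}$) are independent; moreover, when $r\in(0,1)$ this limit also equals in distribution $S_{\alpha,1}\big(1+\frac{1-r}{r}Q_{1-r,r}\big)^{1/\alpha}$ with $S_{\alpha,1}$ and $Q_{1-r,r}$ independent.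
   Context: $\Longrightarrow$ denotes convergence in distribution and $\stackrel{d}{=}$ equality in distribution. $G_{s,1}$ is a gamma random variable with density $\frac1{\Gamma(s)}x^{s-1}e^{-x}$, $x\ge0$, for $s>0$, and $G_{0,1}:=0$. For $0<\alpha\le1$, $S_{\alpha,1}$ has characteristic function $\exp\{-|t|^{\alpha}\exp(-\tfrac12 i\pi\alpha\,\mathrm{sign}\,t)\}$ (degenerate at $1$ if $\alpha=1$). For $r\in(0,1]$, $\mu>0$, $Z_{r,\mu}=\mu(G_{r,1}+G_{1-r,1})/G_{r,1}$ with independent gamma factors. For $r\in(0,1)$, $Q_{1-r,r}$ has the Snedecor–Fisher density $q(x)=\frac{(1-r)^{1-r}r^r}{\Gamma(1-r)\Gamma(r)}\cdot\frac{1}{x^{r}[r+(1-r)x]}$, $x\ge0$. *)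

theory Defs
  imports "HOL-Probability.Probability"
begin

text \<open>Law of the gamma random variable G_{s,1}: density x^(s-1) e^(-x) / Gamma(s) on x > 0
  for s > 0, and the point mass at 0 for s = 0 (convention G_{0,1} := 0).\<close>
definition gamma_law :: "real \<Rightarrow> real measure" where
  "gamma_law s = (if s = 0 then return borel 0
     else density lborel (\<lambda>x. ennreal (indicator {0<..} x * (x powr (s - 1) * exp (- x) / Gamma s))))"

definition Z_law :: "real \<Rightarrow> real \<Rightarrow> real measure" where
  "Z_law r \<mu> = distr (gamma_law r \<Otimes>\<^sub>M gamma_law (1 - r)) borel
     (\<lambda>(g, h). \<mu> * (g + h) / g)"

definition Q_law :: "real \<Rightarrow> real measure" where
  "Q_law r = density lborel (\<lambda>x. ennreal (indicator {0<..} x *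
     ((1 - r) powr (1 - r) * r powr r / (Gamma (1 - r) * Gamma r)
      * (1 / (x powr r * (r + (1 - r) * x))))))"

text \<open>Convergence in distribution of a family of real laws along a filter:
  convergence of the cdfs at every continuity point of the limit cdf
  (the filter analogue of weak_conv_m).\<close>
definition weak_conv_filter :: "('b \<Rightarrow> real measure) \<Rightarrow> real measure \<Rightarrow> 'b filter \<Rightarrow> bool" where
  "weak_conv_filter M_fam M F \<longleftrightarrow>
     (\<forall>x. isCont (cdf M) x \<longrightarrow> ((\<lambda>\<mu>. cdf (M_fam \<mu>) x) \<longlongrightarrow> cdf M x) F)"

end

theory Submission
  imports Defs
begin


lemma sets_gamma_law[measurable_cong, simp]: "sets (gamma_law s) = sets borel"
  by (simp add: gamma_law_def)

lemma space_gamma_law[simp]: "space (gamma_law s) = UNIV"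
  by (simp add: gamma_law_def)

lemma nn_gamma_aux:
  assumes "s > 0"
  shows "(\<integral>\<^sup>+x. ennreal (indicator {0<..} x * (x powr (s - 1) * exp (- x) / Gamma s)) \<partial>lborel) = 1"
proof -
  have "(\<integral>\<^sup>+x. ennreal (indicator {0<..} x * (x powr (s - 1) * exp (- x) / Gamma s)) \<partial>lborel)
     = (\<integral>\<^sup>+x. ennreal (indicator {0..} x * x powr (s - 1) / exp x) * ennreal (1 / Gamma s) \<partial>lborel)"
  proof (rule nn_integral_cong_AE)
    show "AE x in lborel. ennreal (indicator {0<..} x * (x powr (s - 1) * exp (- x) / Gamma s)) =
       ennreal (indicator {0..} x * x powr (s - 1) / exp x) * ennreal (1 / Gamma s)"
      using AE_lborel_singleton[of 0]
    proof eventually_elim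
      case (elim x)
      have "Gamma s > 0" using assms by (simp add: Gamma_real_pos)
      then show ?case using elim
        by (auto simp: indicator_def ennreal_mult'[symmetric] exp_minus field_simps)
    qed
  qed
  also have "\<dots> = ennreal (Gamma s) * ennreal (1 / Gamma s)"
    by (simp add: nn_integral_multc Gamma_conv_nn_integral_real[OF assms])
  also have "\<dots> = 1"
    using Gamma_real_pos[OF assms] by (simp add: ennreal_mult'[symmetric])
  finally show ?thesis .
qed

lemma prob_space_gamma_law: "s \<ge> 0 \<Longrightarrow> prob_space (gamma_law s)"
proof (cases "s = 0")
  case True then show ?thesis by (simp add: gamma_law_def prob_space_return)
next
  case False
  assume "s \<ge> 0"
  with False have s: "s > 0" by simp
  show ?thesis
    unfolding gamma_law_def using False
    by (intro prob_spaceI) (use nn_gamma_aux[OF s] in \<open>simp add: emeasure_density\<close>)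
qed

lemma AE_gamma_pos: "s > 0 \<Longrightarrow> AE x in gamma_law s. 0 < x"
  unfolding gamma_law_def
  by (auto simp: AE_density indicator_def intro!: AE_I2)

lemma AE_gamma_nonneg: "s \<ge> 0 \<Longrightarrow> AE x in gamma_law s. 0 \<le> x"
proof (cases "s = 0")
  case True
  have "{x \<in> space (return borel (0::real)). 0 \<le> x} \<in> sets (return borel 0)" by simp
  then show ?thesis unfolding True gamma_law_def by (simp add: AE_return)
next
  case False
  assume "s \<ge> 0"
  with False have "s > 0" by simp
  from AE_gamma_pos[OF this] show ?thesis by eventually_elim simp
qed



lemma pair_distr_right:
  assumes N: "prob_space N" and phi[measurable]: "\<phi> \<in> borel_measurable N"
    and F: "F \<in> borel_measurable (S \<Otimes>\<^sub>M borel)"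
  shows "distr (S \<Otimes>\<^sub>M distr N borel \<phi>) borel F = distr (S \<Otimes>\<^sub>M N) borel (\<lambda>(x,y). F (x, \<phi> y))"
proof -
  have sf: "sigma_finite_measure (distr N borel \<phi>)"
    using prob_space.prob_space_distr[OF N phi] by (simp add: prob_space_imp_sigma_finite)
  have "distr S S (\<lambda>x. x) \<Otimes>\<^sub>M distr N borel \<phi> = distr (S \<Otimes>\<^sub>M N) (S \<Otimes>\<^sub>M borel) (\<lambda>(x, y). (x, \<phi> y))"
    by (rule pair_measure_distr[OF measurable_ident_sets[OF refl] phi sf])
  then have eq: "S \<Otimes>\<^sub>M distr N borel \<phi> = distr (S \<Otimes>\<^sub>M N) (S \<Otimes>\<^sub>M borel) (\<lambda>(x, y). (x, \<phi> y))"
    by simp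
  have m: "(\<lambda>(x, y). (x, \<phi> y)) \<in> measurable (S \<Otimes>\<^sub>M N) (S \<Otimes>\<^sub>M borel)"
    by measurable
  show ?thesis
    unfolding eq by (subst distr_distr[OF F m]) (simp_all add: o_def case_prod_unfold)
qed

lemma wc_lemma:
  fixes g :: "real \<Rightarrow> 'a \<Rightarrow> real"
  assumes P: "prob_space P" and f[measurable]: "f \<in> borel_measurable P"
    and g[measurable]: "\<And>\<mu>. g \<mu> \<in> borel_measurable P"
    and lim: "AE \<omega> in P. ((\<lambda>\<mu>. g \<mu> \<omega>) \<longlongrightarrow> f \<omega>) (at_right 0)"
  shows "weak_conv_filter (\<lambda>\<mu>. distr P borel (g \<mu>)) (distr P borel f) (at_right 0)"
  unfolding weak_conv_filter_def
proof (intro allI impI)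
  interpret prob_space P by fact
  fix x assume cont: "isCont (cdf (distr P borel f)) x"
  interpret D: real_distribution "distr P borel f" using f by simp
  have "measure (distr P borel f) {x} = 0" using cont D.isCont_cdf by simp
  then have "measure P (f -` {x} \<inter> space P) = 0" by (simp add: measure_distr)
  then have "f -` {x} \<inter> space P \<in> null_sets P"
    by (simp add: null_sets_def emeasure_eq_measure)
  then have AEne: "AE \<omega> in P. f \<omega> \<noteq> x"
    by (rule AE_I') auto
  have cdf_eq: "cdf (distr P borel h) x = (\<integral>\<omega>. indicator {..x} (h \<omega>) \<partial>P)"
    if [measurable]: "h \<in> borel_measurable P" for h :: "_ \<Rightarrow> real"
  proof -
    have "(\<integral>\<omega>. indicator {..x} (h \<omega>) \<partial>P) = (integral\<^sup>L (distr P borel h) (indicator {..x}) :: real)"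
      by (subst integral_distr) auto
    also have "\<dots> = measure (distr P borel h) {..x}" by simp
    finally show ?thesis by (simp add: cdf_def)
  qed
  have "((\<lambda>t. (\<integral>\<omega>. indicator {..x} (g (inverse t) \<omega>) \<partial>P) :: real)
        \<longlongrightarrow> (\<integral>\<omega>. indicator {..x} (f \<omega>) \<partial>P)) at_top"
  proof (rule integral_dominated_convergence_at_top[where w = "\<lambda>_. 1"])
    show "AE \<omega> in P. ((\<lambda>t. indicator {..x} (g (inverse t) \<omega>) :: real) \<longlongrightarrow> indicator {..x} (f \<omega>)) at_top"
      using lim AEne
    proof eventually_elim
      case (elim \<omega>)
      then have L: "((\<lambda>t. g (inverse t) \<omega>) \<longlongrightarrow> f \<omega>) at_top"
        by (simp add: filterlim_at_right_to_top)
      show ?case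
      proof (cases "f \<omega> < x")
        case True
        then have "eventually (\<lambda>t. g (inverse t) \<omega> < x) at_top"
          using order_tendstoD(2)[OF L] by blast
        then show ?thesis using True
          by (intro tendsto_eventually) (auto elim!: eventually_mono simp: indicator_def)
      next
        case False
        with elim have "f \<omega> > x" by auto
        then have "eventually (\<lambda>t. g (inverse t) \<omega> > x) at_top"
          using order_tendstoD(1)[OF L] by blast
        then show ?thesis using \<open>f \<omega> > x\<close>
          by (intro tendsto_eventually) (auto elim!: eventually_mono simp: indicator_def)
      qed
    qed
  qed auto
  then have "((\<lambda>\<mu>. (\<integral>\<omega>. indicator {..x} (g \<mu> \<omega>) \<partial>P) :: real)
        \<longlongrightarrow> (\<integral>\<omega>. indicator {..x} (f \<omega>) \<partial>P)) (at_right 0)"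
    by (simp add: filterlim_at_right_to_top)
  then show "((\<lambda>\<mu>. cdf (distr P borel (g \<mu>)) x) \<longlongrightarrow> cdf (distr P borel f) x) (at_right 0)"
    by (simp add: cdf_eq)
qed



definition psi :: "real \<Rightarrow> real \<Rightarrow> real" where
  "psi r x = indicator {0<..} x * (x powr (- r) / ((1 + x) * (Gamma r * Gamma (1 - r))))"

lemma exp_nn_integral:
  assumes a: "0 < a"
  shows "(\<integral>\<^sup>+g. ennreal (indicator {0<..} g * exp (- (g * a))) \<partial>lborel) = ennreal (1 / a)"
proof -
  have "(\<integral>\<^sup>+g. ennreal (indicator {0<..} g * exp (- (g * a))) \<partial>lborel)
      = (\<integral>\<^sup>+g. ennreal (1 / a) * ennreal (exponential_density a g) \<partial>lborel)"
  proof (rule nn_integral_cong_AE)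
    show "AE g in lborel. ennreal (indicator {0<..} g * exp (- (g * a))) = ennreal (1 / a) * ennreal (exponential_density a g)"
      using AE_lborel_singleton[of 0]
    proof eventually_elim
      case (elim g)
      then show ?case using a
        by (auto simp: exponential_density_def indicator_def ennreal_mult'[symmetric] mult.commute)
    qed
  qed
  also have "\<dots> = ennreal (1 / a) * (\<integral>\<^sup>+g. ennreal (exponential_density a g) \<partial>lborel)"
    by (rule nn_integral_cmult) simp
  also have "(\<integral>\<^sup>+g. ennreal (exponential_density a g) \<partial>lborel) = 1"
  proof -
    interpret prob_space "density lborel (exponential_density a)"
      using prob_space_exponential_density[OF a] .
    have "emeasure (density lborel (exponential_density a)) UNIV = 1"
      using emeasure_space_1 by simp
    then show ?thesis by (simp add: emeasure_density)
  qed
  finally show ?thesis by simp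
qed

lemma psi_Q:
  assumes r: "0 < r" "r < 1"
  shows "r / (1 - r) * (indicator {0<..} (r / (1 - r) * x) *
     ((1 - r) powr (1 - r) * r powr r / (Gamma (1 - r) * Gamma r)
      * (1 / ((r / (1 - r) * x) powr r * (r + (1 - r) * (r / (1 - r) * x)))))) = psi r x"
proof (cases "x > 0")
  case False
  have "r / (1 - r) * x \<le> 0" using False r by (intro mult_nonneg_nonpos) auto
  then have "\<not> r / (1 - r) * x > 0" by linarith
  then show ?thesis using False by (simp add: psi_def)
next
  case True
  define c where "c = r / (1 - r)"
  have c: "c > 0" using r by (simp add: c_def)
  have cx: "c * x > 0" using c True by simp
  have G: "Gamma r > 0" "Gamma (1 - r) > 0" using r by (simp_all add: Gamma_real_pos)
  have e1: "(c * x) powr r = r powr r / (1 - r) powr r * x powr r"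
    using r True c by (simp add: c_def powr_mult powr_divide)
  define y where "y = 1 + x"
  have y: "y > 0" using True by (simp add: y_def)
  have e2: "r + (1 - r) * (c * x) = r * y"
    using r by (simp add: c_def y_def field_simps)
  have e3: "(1 - r) powr (1 - r) * (1 - r) powr r = 1 - r"
    using r by (simp add: powr_add[symmetric])
  have e4: "x powr (- r) = 1 / x powr r" using True by (simp add: powr_minus_divide)
  have pos: "r powr r > 0" "(1 - r) powr r > 0" "x powr r > 0" "(1 - r) powr (1 - r) > 0"
    using r True by auto
  have "c * ((1 - r) powr (1 - r) * r powr r / (Gamma (1 - r) * Gamma r)
      * (1 / ((c * x) powr r * (r + (1 - r) * (c * x)))))
      = c * ((1 - r) powr (1 - r) * (1 - r) powr r) / (r * (y * (Gamma r * Gamma (1 - r))) * x powr r)"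
    unfolding e1 e2 using pos G r True y by (simp add: field_simps)
  also have "\<dots> = psi r x"
  proof -
    have cr: "c * (1 - r) = r" using r by (simp add: c_def)
    show ?thesis
      unfolding e3 e4 psi_def y_def[symmetric] cr using True r G pos y by simp
  qed
  finally show ?thesis using cx by (simp add: c_def)
qed

lemma Q_ratio:
  assumes r: "0 < r" "r < 1" and A[measurable]: "A \<in> sets borel"
  shows "emeasure (distr (Q_law r) borel (\<lambda>q. (1 - r) / r * q)) A
     = (\<integral>\<^sup>+x. ennreal (psi r x) * indicator A x \<partial>lborel)"
proof -
  define dQ where "dQ q = indicator {0<..} q *
     ((1 - r) powr (1 - r) * r powr r / (Gamma (1 - r) * Gamma r)
      * (1 / (q powr r * (r + (1 - r) * q))))" for q
  have QL: "Q_law r = density lborel (\<lambda>q. ennreal (dQ q))" by (simp add: Q_law_def dQ_def)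
  have [measurable]: "dQ \<in> borel_measurable borel" unfolding dQ_def by measurable
  define c where "c = r / (1 - r)"
  have c: "c > 0" using r by (simp add: c_def)
  have "emeasure (distr (Q_law r) borel (\<lambda>q. (1 - r) / r * q)) A
      = (\<integral>\<^sup>+q. ennreal (dQ q) * indicator A ((1 - r) / r * q) \<partial>lborel)"
  proof -
    have "emeasure (distr (Q_law r) borel (\<lambda>q. (1 - r) / r * q)) A
        = emeasure (Q_law r) ((\<lambda>q. (1 - r) / r * q) -` A)"
      by (subst emeasure_distr) (auto simp: Q_law_def)
    also have "\<dots> = (\<integral>\<^sup>+q. ennreal (dQ q) * indicator ((\<lambda>q. (1 - r) / r * q) -` A) q \<partial>lborel)"
    proof -
      have V: "(\<lambda>q. (1 - r) / r * q) -` A \<in> sets lborel"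
        unfolding sets_lborel by (rule measurable_sets_borel[OF _ A]) measurable
      show ?thesis unfolding QL by (rule emeasure_density[OF _ V]) measurable
    qed
    also have "\<dots> = (\<integral>\<^sup>+q. ennreal (dQ q) * indicator A ((1 - r) / r * q) \<partial>lborel)"
      by (auto simp: indicator_def intro!: nn_integral_cong)
    finally show ?thesis .
  qed
  also have "\<dots> = ennreal c * (\<integral>\<^sup>+x. ennreal (dQ (c * x)) * indicator A ((1 - r) / r * (c * x)) \<partial>lborel)"
    using nn_integral_real_affine[of "\<lambda>q. ennreal (dQ q) * indicator A ((1 - r) / r * q)" c 0] c
    by simp
  also have "\<dots> = (\<integral>\<^sup>+x. ennreal c * (ennreal (dQ (c * x)) * indicator A ((1 - r) / r * (c * x))) \<partial>lborel)"
    by (rule nn_integral_cmult[symmetric]) measurable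
  also have "\<dots> = (\<integral>\<^sup>+x. ennreal (psi r x) * indicator A x \<partial>lborel)"
  proof (rule nn_integral_cong)
    fix x :: real
    have "(1 - r) / r * (c * x) = x" using r by (simp add: c_def)
    moreover have "c * dQ (c * x) = psi r x" using psi_Q[OF r, of x] by (simp add: c_def dQ_def)
    moreover have "dQ (c * x) \<ge> 0" using r c
      by (simp add: dQ_def indicator_def zero_less_mult_iff Gamma_real_pos)
    ultimately show "ennreal c * (ennreal (dQ (c * x)) * indicator A ((1 - r) / r * (c * x))) = ennreal (psi r x) * indicator A x"
      using c by (simp add: ennreal_mult'[symmetric] mult.assoc[symmetric])
  qed
  finally show ?thesis .
qed



lemma ratio_point:
  fixes r g x :: real
  assumes r: "0 < r" "r < 1" and g: "0 < g" and x: "0 < x"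
  shows "g powr (r - 1) * exp (- g) / Gamma r * g * ((g * x) powr (1 - r - 1) * exp (- (g * x)) / Gamma (1 - r))
    = x powr (- r) / (Gamma r * Gamma (1 - r)) * exp (- (g * (1 + x)))"
proof -
  have e1: "(g * x) powr (1 - r - 1) = g powr (- r) * x powr (- r)"
    using powr_mult[of g x "- r"] g x by simp
  have e2: "g powr (r - 1) * g * g powr (- r) = 1"
  proof -
    have "g powr (r - 1) * g * g powr (- r) = g powr (r - 1) * g powr 1 * g powr (- r)" using g by simp
    also have "\<dots> = g powr (r - 1 + 1 + - r)" by (simp only: powr_add)
    also have "\<dots> = 1" using g by simp
    finally show ?thesis .
  qed
  have e3: "exp (- g) * exp (- (g * x)) = exp (- (g * (1 + x)))"
    by (simp add: exp_add[symmetric] algebra_simps)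
  have "g powr (r - 1) * exp (- g) / Gamma r * g * ((g * x) powr (1 - r - 1) * exp (- (g * x)) / Gamma (1 - r))
      = (g powr (r - 1) * g * g powr (- r)) * x powr (- r) * (exp (- g) * exp (- (g * x))) / (Gamma r * Gamma (1 - r))"
    unfolding e1 by (simp add: field_simps)
  also have "\<dots> = x powr (- r) / (Gamma r * Gamma (1 - r)) * exp (- (g * (1 + x)))"
    unfolding e2 e3 by simp
  finally show ?thesis .
qed

lemma G_ratio:
  assumes r: "0 < r" "r < 1" and A[measurable]: "A \<in> sets borel"
  shows "emeasure (distr (gamma_law r \<Otimes>\<^sub>M gamma_law (1 - r)) borel (\<lambda>(g, h). h / g)) A
     = (\<integral>\<^sup>+x. ennreal (psi r x) * indicator A x \<partial>lborel)"
proof -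
  define dr where "dr g = indicator {0<..} g * (g powr (r - 1) * exp (- g) / Gamma r)" for g
  define dq where "dq h = indicator {0<..} h * (h powr ((1 - r) - 1) * exp (- h) / Gamma (1 - r))" for h
  have [measurable]: "dr \<in> borel_measurable borel" "dq \<in> borel_measurable borel"
    unfolding dr_def dq_def by measurable
  have Gr: "gamma_law r = density lborel (\<lambda>g. ennreal (dr g))"
    using r by (simp add: gamma_law_def dr_def)
  have Gq: "gamma_law (1 - r) = density lborel (\<lambda>g. ennreal (dq g))"
    using r by (simp add: gamma_law_def dq_def)
  have GP: "Gamma r > 0" "Gamma (1 - r) > 0" using r by (simp_all add: Gamma_real_pos)
  have dr0: "dr g \<ge> 0" for g using GP by (simp add: dr_def)
  have dq0: "dq g \<ge> 0" for g using GP by (simp add: dq_def)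
  interpret Q: sigma_finite_measure "gamma_law (1 - r)"
    using prob_space_gamma_law[of "1 - r"] r by (simp add: prob_space_imp_sigma_finite)
  have "emeasure (distr (gamma_law r \<Otimes>\<^sub>M gamma_law (1 - r)) borel (\<lambda>(g, h). h / g)) A
      = (\<integral>\<^sup>+ x. indicator A x \<partial>distr (gamma_law r \<Otimes>\<^sub>M gamma_law (1 - r)) borel (\<lambda>(g, h). h / g))"
    by (rule nn_integral_indicator[symmetric]) simp
  also have "\<dots> = (\<integral>\<^sup>+ \<omega>. indicator A ((\<lambda>(g, h). h / g) \<omega>) \<partial>(gamma_law r \<Otimes>\<^sub>M gamma_law (1 - r)))"
    by (rule nn_integral_distr) measurable
  also have "\<dots> = (\<integral>\<^sup>+ g. \<integral>\<^sup>+ h. indicator A (h / g) \<partial>gamma_law (1 - r) \<partial>gamma_law r)"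
  proof -
    have m: "(\<lambda>\<omega>. indicator A ((\<lambda>(g, h). h / g) \<omega>) :: ennreal) \<in> borel_measurable (gamma_law r \<Otimes>\<^sub>M gamma_law (1 - r))"
      by measurable
    show ?thesis by (subst Q.nn_integral_fst[OF m, symmetric]) simp
  qed
  also have "\<dots> = (\<integral>\<^sup>+ g. ennreal (dr g) * (\<integral>\<^sup>+ h. ennreal (dq h) * indicator A (h / g) \<partial>lborel) \<partial>lborel)"
    unfolding Gr Gq by ((subst nn_integral_density, measurable)+)
  also have "\<dots> = (\<integral>\<^sup>+ g. \<integral>\<^sup>+ x. ennreal (dr g * g * dq (g * x)) * indicator A x \<partial>lborel \<partial>lborel)"
  proof (rule nn_integral_cong)
    fix g :: real
    show "ennreal (dr g) * (\<integral>\<^sup>+ h. ennreal (dq h) * indicator A (h / g) \<partial>lborel)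
        = (\<integral>\<^sup>+ x. ennreal (dr g * g * dq (g * x)) * indicator A x \<partial>lborel)"
    proof (cases "g > 0")
      case False
      then have "dr g = 0" by (simp add: dr_def)
      then show ?thesis by simp
    next
      case True
      have "(\<integral>\<^sup>+ h. ennreal (dq h) * indicator A (h / g) \<partial>lborel)
          = ennreal g * (\<integral>\<^sup>+ x. ennreal (dq (g * x)) * indicator A (g * x / g) \<partial>lborel)"
        using nn_integral_real_affine[of "\<lambda>h. ennreal (dq h) * indicator A (h / g)" g 0] True
        by simp
      also have "\<dots> = ennreal g * (\<integral>\<^sup>+ x. ennreal (dq (g * x)) * indicator A x \<partial>lborel)"
        using True by simp
      finally have "ennreal (dr g) * (\<integral>\<^sup>+ h. ennreal (dq h) * indicator A (h / g) \<partial>lborel)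
          = ennreal (dr g * g) * (\<integral>\<^sup>+ x. ennreal (dq (g * x)) * indicator A x \<partial>lborel)"
        using True dr0[of g] by (simp add: ennreal_mult' mult.assoc)
      also have "\<dots> = (\<integral>\<^sup>+ x. ennreal (dr g * g) * (ennreal (dq (g * x)) * indicator A x) \<partial>lborel)"
        by (rule nn_integral_cmult[symmetric]) measurable
      also have "\<dots> = (\<integral>\<^sup>+ x. ennreal (dr g * g * dq (g * x)) * indicator A x \<partial>lborel)"
        using True dr0[of g] dq0 by (simp add: ennreal_mult' mult.assoc)
      finally show ?thesis .
    qed
  qed
  also have "\<dots> = (\<integral>\<^sup>+ x. \<integral>\<^sup>+ g. ennreal (dr g * g * dq (g * x)) * indicator A x \<partial>lborel \<partial>lborel)"
    by (rule lborel_pair.Fubini'[symmetric]) measurable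
  also have "\<dots> = (\<integral>\<^sup>+ x. ennreal (psi r x) * indicator A x \<partial>lborel)"
  proof (rule nn_integral_cong)
    fix x :: real
    have "(\<integral>\<^sup>+ g. ennreal (dr g * g * dq (g * x)) \<partial>lborel) = ennreal (psi r x)"
    proof (cases "x > 0")
      case False
      have Z: "dr g * g * dq (g * x) = 0" for g
      proof (cases "g > 0")
        case True
        then have "g * x \<le> 0" using False by (simp add: mult_nonneg_nonpos)
        then show ?thesis by (simp add: dq_def)
      qed (simp add: dr_def)
      show ?thesis unfolding Z using False by (simp add: psi_def)
    next
      case True
      have "(\<integral>\<^sup>+ g. ennreal (dr g * g * dq (g * x)) \<partial>lborel)
          = (\<integral>\<^sup>+ g. ennreal (x powr (- r) / (Gamma r * Gamma (1 - r))) *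
                ennreal (indicator {0<..} g * exp (- (g * (1 + x)))) \<partial>lborel)"
      proof (rule nn_integral_cong)
        fix g :: real
        show "ennreal (dr g * g * dq (g * x)) = ennreal (x powr (- r) / (Gamma r * Gamma (1 - r))) *
                ennreal (indicator {0<..} g * exp (- (g * (1 + x))))"
        proof (cases "g > 0")
          case True
          then show ?thesis using ratio_point[OF r True \<open>x > 0\<close>] \<open>x > 0\<close> GP
            by (simp add: dr_def dq_def ennreal_mult'[symmetric])
        qed (simp add: dr_def)
      qed
      also have "\<dots> = ennreal (x powr (- r) / (Gamma r * Gamma (1 - r))) * ennreal (1 / (1 + x))"
        using exp_nn_integral[of "1 + x"] True by (simp add: nn_integral_cmult)
      also have "\<dots> = ennreal (psi r x)"
        using True GP by (simp add: psi_def ennreal_mult'[symmetric] field_simps)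
      finally show ?thesis .
    qed
    then show "(\<integral>\<^sup>+ g. ennreal (dr g * g * dq (g * x)) * indicator A x \<partial>lborel) = ennreal (psi r x) * indicator A x"
      by (simp add: nn_integral_multc)
  qed
  finally show ?thesis .
qed



lemma Q_law_sets[measurable_cong, simp]: "sets (Q_law r) = sets borel"
  by (simp add: Q_law_def)

lemma Z_law_sets[measurable_cong, simp]: "sets (Z_law r \<mu>) = sets borel"
  by (simp add: Z_law_def)

lemma ratio_law:
  assumes "0 < r" "r < 1"
  shows "distr (gamma_law r \<Otimes>\<^sub>M gamma_law (1 - r)) borel (\<lambda>(g, h). h / g)
       = distr (Q_law r) borel (\<lambda>q. (1 - r) / r * q)"
proof (rule measure_eqI)
  fix A assume "A \<in> sets (distr (gamma_law r \<Otimes>\<^sub>M gamma_law (1 - r)) borel (\<lambda>(g, h). h / g))"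
  then have A: "A \<in> sets borel" by simp
  show "emeasure (distr (gamma_law r \<Otimes>\<^sub>M gamma_law (1 - r)) borel (\<lambda>(g, h). h / g)) A =
        emeasure (distr (Q_law r) borel (\<lambda>q. (1 - r) / r * q)) A"
    using G_ratio[OF assms A] Q_ratio[OF assms A] by simp
qed simp

theorem corollary1:
  fixes r \<alpha> :: real and S :: "real measure"
  assumes r: "0 < r" "r \<le> 1"
    and \<alpha>: "0 < \<alpha>" "\<alpha> \<le> 1"
    and S_law: "real_distribution S"
    and S_char: "\<And>t. char S t = exp (- complex_of_real (\<bar>t\<bar> powr \<alpha>)
                    * exp (- \<i> * complex_of_real (pi * \<alpha> / 2 * sgn t)))"
  shows "weak_conv_filter
           (\<lambda>\<mu>. distr (distr (S \<Otimes>\<^sub>M Z_law r \<mu>) borel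
                    (\<lambda>(s, z). s * z powr (1 / \<alpha>) / (1 + s * z powr (1 / \<alpha>))))
                  borel (\<lambda>y. \<mu> powr (- 1 / \<alpha>) * y))
           (distr (S \<Otimes>\<^sub>M Z_law r 1) borel (\<lambda>(s, z). s * z powr (1 / \<alpha>)))
           (at_right 0)
       \<and> distr (S \<Otimes>\<^sub>M Z_law r 1) borel (\<lambda>(s, z). s * z powr (1 / \<alpha>))
         = distr (S \<Otimes>\<^sub>M (gamma_law r \<Otimes>\<^sub>M gamma_law (1 - r))) borel
             (\<lambda>(s, g, h). s * ((g + h) / g) powr (1 / \<alpha>))
       \<and> (r < 1 \<longrightarrow>
           distr (S \<Otimes>\<^sub>M Z_law r 1) borel (\<lambda>(s, z). s * z powr (1 / \<alpha>))
           = distr (S \<Otimes>\<^sub>M Q_law r) borel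
               (\<lambda>(s, q). s * (1 + (1 - r) / r * q) powr (1 / \<alpha>)))"
proof -
  interpret S: real_distribution S by fact
  have [measurable_cong]: "sets S = sets borel" by simp
  define G where "G = gamma_law r \<Otimes>\<^sub>M gamma_law (1 - r)"
  define P where "P = S \<Otimes>\<^sub>M G"
  have [measurable_cong]: "sets G = sets (borel \<Otimes>\<^sub>M borel)"
    unfolding G_def by (rule sets_pair_measure_cong[OF sets_gamma_law sets_gamma_law])
  have [measurable_cong]: "sets P = sets (borel \<Otimes>\<^sub>M (borel \<Otimes>\<^sub>M borel))"
    unfolding P_def by (rule sets_pair_measure_cong) fact+
  have pGr: "prob_space (gamma_law r)" using r by (intro prob_space_gamma_law) simp
  have pGq: "prob_space (gamma_law (1 - r))" using r by (intro prob_space_gamma_law) simp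
  have pG: "prob_space G" unfolding G_def by (intro prob_space_pair pGr pGq)
  have pP: "prob_space P" unfolding P_def by (intro prob_space_pair pG S.prob_space_axioms)
  have Zeq: "Z_law r \<mu> = distr G borel (\<lambda>(g, h). \<mu> * (g + h) / g)" for \<mu>
    by (simp add: Z_law_def G_def)
  define \<beta> where "\<beta> = 1 / \<alpha>"
  have \<beta>: "\<beta> > 0" using \<alpha> by (simp add: \<beta>_def)
  have AEG: "AE y in G. 0 < fst y \<and> 0 \<le> snd y"
  proof -
    interpret pair_sigma_finite "gamma_law r" "gamma_law (1 - r)"
      using pGr pGq by (simp add: pair_sigma_finite_def prob_space_imp_sigma_finite)
    show ?thesis unfolding G_def
    proof (rule AE_pair_measure)
      show "AE x in gamma_law r. AE y in gamma_law (1 - r). 0 < fst (x, y) \<and> 0 \<le> snd (x, y)"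
        using AE_gamma_pos[OF r(1)]
      proof eventually_elim
        case (elim x)
        show ?case using AE_gamma_nonneg[of "1 - r"] r elim
          by (auto elim!: AE_mp intro!: AE_I2)
      qed
    qed measurable
  qed
  have AEP: "AE \<omega> in P. 0 < fst (snd \<omega>) \<and> 0 \<le> snd (snd \<omega>)"
  proof -
    interpret pair_sigma_finite S G
      using pG by (simp add: pair_sigma_finite_def prob_space_imp_sigma_finite S.sigma_finite_measure_axioms)
    show ?thesis unfolding P_def
    proof (rule AE_pair_measure)
      show "AE x in S. AE y in G. 0 < fst (snd (x, y)) \<and> 0 \<le> snd (snd (x, y))"
      proof (rule AE_I2)
        show "AE y in G. 0 < fst (snd (x, y)) \<and> 0 \<le> snd (snd (x, y))" for x
          using AEG by simp
      qed
    qed measurable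
  qed
  have Zrw: "distr (S \<Otimes>\<^sub>M Z_law r \<mu>) borel F = distr P borel (\<lambda>(s, g, h). F (s, \<mu> * (g + h) / g))"
    if [measurable]: "F \<in> borel_measurable (borel \<Otimes>\<^sub>M borel)" for F \<mu>
    unfolding Zeq P_def
    by (subst pair_distr_right[OF pG]) (simp_all add: case_prod_unfold)
  have lim1: "distr (S \<Otimes>\<^sub>M Z_law r 1) borel (\<lambda>(s, z). s * z powr (1 / \<alpha>))
      = distr P borel (\<lambda>(s, g, h). s * ((g + h) / g) powr (1 / \<alpha>))"
    by (subst Zrw) (simp_all add: case_prod_unfold)
  have part1: "weak_conv_filter
           (\<lambda>\<mu>. distr (distr (S \<Otimes>\<^sub>M Z_law r \<mu>) borel
                    (\<lambda>(s, z). s * z powr (1 / \<alpha>) / (1 + s * z powr (1 / \<alpha>))))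
                  borel (\<lambda>y. \<mu> powr (- 1 / \<alpha>) * y))
           (distr (S \<Otimes>\<^sub>M Z_law r 1) borel (\<lambda>(s, z). s * z powr (1 / \<alpha>)))
           (at_right 0)"
  proof -
    have eq: "distr (distr (S \<Otimes>\<^sub>M Z_law r \<mu>) borel
                    (\<lambda>(s, z). s * z powr (1 / \<alpha>) / (1 + s * z powr (1 / \<alpha>))))
                  borel (\<lambda>y. \<mu> powr (- 1 / \<alpha>) * y)
      = distr P borel (\<lambda>(s, g, h). \<mu> powr (- 1 / \<alpha>) * (s * (\<mu> * (g + h) / g) powr (1 / \<alpha>)
           / (1 + s * (\<mu> * (g + h) / g) powr (1 / \<alpha>))))" for \<mu>
    proof -
      have "distr (distr (S \<Otimes>\<^sub>M Z_law r \<mu>) borel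
                    (\<lambda>(s, z). s * z powr (1 / \<alpha>) / (1 + s * z powr (1 / \<alpha>))))
                  borel (\<lambda>y. \<mu> powr (- 1 / \<alpha>) * y)
        = distr (S \<Otimes>\<^sub>M Z_law r \<mu>) borel (\<lambda>(s, z). \<mu> powr (- 1 / \<alpha>) * (s * z powr (1 / \<alpha>) / (1 + s * z powr (1 / \<alpha>))))"
        by (subst distr_distr) (simp_all add: o_def case_prod_unfold)
      also have "\<dots> = distr P borel (\<lambda>(s, g, h). \<mu> powr (- 1 / \<alpha>) * (s * (\<mu> * (g + h) / g) powr (1 / \<alpha>)
           / (1 + s * (\<mu> * (g + h) / g) powr (1 / \<alpha>))))"
        by (subst Zrw) (simp_all add: case_prod_unfold)
      finally show ?thesis by (simp add: case_prod_unfold)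
    qed
    show ?thesis
      unfolding eq lim1
    proof (rule wc_lemma[OF pP])
      show "AE \<omega> in P. ((\<lambda>\<mu>. (case \<omega> of (s, g, h) \<Rightarrow> \<mu> powr (- 1 / \<alpha>) * (s * (\<mu> * (g + h) / g) powr (1 / \<alpha>)
           / (1 + s * (\<mu> * (g + h) / g) powr (1 / \<alpha>))))) \<longlongrightarrow>
          (case \<omega> of (s, g, h) \<Rightarrow> s * ((g + h) / g) powr (1 / \<alpha>))) (at_right 0)"
        using AEP
      proof eventually_elim
        case (elim \<omega>)
        obtain s g h where om: "\<omega> = (s, g, h)" by (cases \<omega>) auto
        with elim have g: "0 < g" and h: "0 \<le> h" by auto
        define w where "w = (g + h) / g"
        have w: "0 < w" using g h by (simp add: w_def)
        have ev: "eventually (\<lambda>\<mu>. s * w powr \<beta> / (1 + \<mu> powr \<beta> * (s * w powr \<beta>)) =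
             \<mu> powr (- 1 / \<alpha>) * (s * (\<mu> * (g + h) / g) powr (1 / \<alpha>)
           / (1 + s * (\<mu> * (g + h) / g) powr (1 / \<alpha>)))) (at_right 0)"
          unfolding eventually_at_right_field
        proof (intro exI[of _ 1] conjI allI impI)
          fix \<mu> :: real assume \<mu>: "0 < \<mu>" "\<mu> < 1"
          have e1: "\<mu> * (g + h) / g = \<mu> * w" by (simp add: w_def)
          have e2: "(\<mu> * w) powr \<beta> = \<mu> powr \<beta> * w powr \<beta>"
            using \<mu> w by (simp add: powr_mult)
          have e3: "\<mu> powr (- 1 / \<alpha>) * \<mu> powr \<beta> = 1"
            using \<mu> by (simp add: \<beta>_def powr_add[symmetric])
          show "s * w powr \<beta> / (1 + \<mu> powr \<beta> * (s * w powr \<beta>)) =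
             \<mu> powr (- 1 / \<alpha>) * (s * (\<mu> * (g + h) / g) powr (1 / \<alpha>)
           / (1 + s * (\<mu> * (g + h) / g) powr (1 / \<alpha>)))"
            unfolding e1 \<beta>_def[symmetric] e2
            using e3 by (simp add: field_simps)
        qed simp
        have "((\<lambda>\<mu>. s * w powr \<beta> / (1 + \<mu> powr \<beta> * (s * w powr \<beta>))) \<longlongrightarrow>
               s * w powr \<beta> / (1 + 0 * (s * w powr \<beta>))) (at_right 0)"
          by (intro tendsto_intros tendsto_zero_powrI[OF _ tendsto_const] \<beta>)
             (auto intro!: tendsto_ident_at eventually_mono[OF eventually_at_right_less])
        then have "((\<lambda>\<mu>. s * w powr \<beta> / (1 + \<mu> powr \<beta> * (s * w powr \<beta>))) \<longlongrightarrow>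
               s * w powr \<beta>) (at_right 0)" by simp
        then show ?case unfolding om using ev
          by (simp add: w_def \<beta>_def tendsto_cong)
      qed
    qed measurable
  qed
  have part3: "distr (S \<Otimes>\<^sub>M Z_law r 1) borel (\<lambda>(s, z). s * z powr (1 / \<alpha>))
           = distr (S \<Otimes>\<^sub>M Q_law r) borel
               (\<lambda>(s, q). s * (1 + (1 - r) / r * q) powr (1 / \<alpha>))" if r1: "r < 1"
  proof -
    define H where "H = (\<lambda>(s, w). s * (1 + w) powr (1 / \<alpha>))"
    have [measurable]: "H \<in> borel_measurable (borel \<Otimes>\<^sub>M borel)" unfolding H_def by measurable
    have RL: "distr G borel (\<lambda>(g, h). h / g) = distr (Q_law r) borel (\<lambda>q. (1 - r) / r * q)"
      unfolding G_def using ratio_law[OF r(1) r1] .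
    have pQ: "prob_space (Q_law r)"
    proof (rule prob_space_distrD[of "\<lambda>q. (1 - r) / r * q" _ borel])
      show "prob_space (distr (Q_law r) borel (\<lambda>q. (1 - r) / r * q))"
        unfolding RL[symmetric] by (rule prob_space.prob_space_distr[OF pG]) measurable
    qed measurable
    have "distr P borel (\<lambda>(s, g, h). s * ((g + h) / g) powr (1 / \<alpha>))
        = distr P borel (\<lambda>(x, y). H (x, (\<lambda>(g, h). h / g) y))"
    proof (rule distr_cong_AE)
      show "AE \<omega> in P. (case \<omega> of (s, g, h) \<Rightarrow> s * ((g + h) / g) powr (1 / \<alpha>)) =
          (case \<omega> of (x, y) \<Rightarrow> H (x, (\<lambda>(g, h). h / g) y))"
        using AEP
      proof eventually_elim
        case (elim \<omega>)
        obtain s g h where om: "\<omega> = (s, g, h)" by (cases \<omega>) auto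
        with elim have g: "0 < g" by auto
        have "(g + h) / g = 1 + h / g" using g by (simp add: field_simps)
        then show ?case by (simp add: om H_def)
      qed
    qed (simp_all add: H_def)
    also have "\<dots> = distr (S \<Otimes>\<^sub>M distr G borel (\<lambda>(g, h). h / g)) borel H"
      unfolding P_def by (rule pair_distr_right[symmetric, OF pG]) measurable
    also have "\<dots> = distr (S \<Otimes>\<^sub>M Q_law r) borel (\<lambda>(x, q). H (x, (1 - r) / r * q))"
      unfolding RL by (rule pair_distr_right[OF pQ]) measurable
    finally show ?thesis unfolding lim1 by (simp add: H_def case_prod_unfold)
  qed
  show ?thesis using part1 part3 lim1 unfolding P_def G_def by blast
qed

end
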